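(* Let $N$ be a 2-step nilpotent real Lie group with a left-invariant pseudo-Riemannian metric $\langle\cdot,\cdot\rangle$ for which the center $\mathfrak z$ of its Lie algebra is nondegenerate. Then $N$ is of pseudo-$H$-type (of $H$-type when the metric is Riemannian) if and only if every nondegenerate semi-central plane has sectional curvature $K=\tfrac14$.
   Context: Put $\mathfrak v=\mathfrak z^\perp$. For $z\in\mathfrak z$ define $j(z)\in\mathrm{End}(\mathfrak v)$ by $\langle [x,y],z\rangle=\langle y,j(z)x\rangle$ for all $x,y\in\mathfrak v$. $N$ is of pseudo-$H$-type if $j(z)^2=-\langle z,z\rangle\,\mathrm{Id}_{\mathfrak v}$ for all $z\in\mathfrak z$; when the metric is Riemannian this is called $H$-type. A semi-central plane is a 2-plane spanned by a vector of $\mathfrak z$ and a vector of $\mathfrak v$; nondegenerate means the metric restricted to it is nondegenerate. Sectional curvature is that of the Levi-Civita connection. *)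

theory Defs
  imports "HOL-Analysis.Analysis"
begin

text \<open>A finite-dimensional real Lie algebra is modelled by a finite-dimensional real vector
space (type of class euclidean_space; its built-in inner product is NOT used) with a bracket.
A left-invariant pseudo-Riemannian metric on the Lie group is modelled by a nondegenerate
symmetric bilinear form g on the Lie algebra.\<close>

definition lie_algebra :: "('a::euclidean_space \<Rightarrow> 'a \<Rightarrow> 'a) \<Rightarrow> bool" where
  "lie_algebra br \<longleftrightarrow> bilinear br \<and> (\<forall>x y. br x y = - br y x)
     \<and> (\<forall>x y w. br x (br y w) + br y (br w x) + br w (br x y) = 0)"

definition two_step_nilpotent :: "('a::euclidean_space \<Rightarrow> 'a \<Rightarrow> 'a) \<Rightarrow> bool" where
  "two_step_nilpotent br \<longleftrightarrow> (\<forall>x y w. br (br x y) w = 0) \<and> (\<exists>x y. br x y \<noteq> 0)"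

definition pseudo_metric :: "('a::euclidean_space \<Rightarrow> 'a \<Rightarrow> real) \<Rightarrow> bool" where
  "pseudo_metric g \<longleftrightarrow> bilinear g \<and> (\<forall>x y. g x y = g y x)
     \<and> (\<forall>x. (\<forall>y. g x y = 0) \<longrightarrow> x = 0)"

definition center :: "('a::euclidean_space \<Rightarrow> 'a \<Rightarrow> 'a) \<Rightarrow> 'a set" where
  "center br = {x. \<forall>y. br x y = 0}"

definition nondeg_on :: "('a::euclidean_space \<Rightarrow> 'a \<Rightarrow> real) \<Rightarrow> 'a set \<Rightarrow> bool" where
  "nondeg_on g S \<longleftrightarrow> (\<forall>x\<in>S. (\<forall>y\<in>S. g x y = 0) \<longrightarrow> x = 0)"

definition vpart :: "('a::euclidean_space \<Rightarrow> 'a \<Rightarrow> real) \<Rightarrow> ('a \<Rightarrow> 'a \<Rightarrow> 'a) \<Rightarrow> 'a set" where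
  "vpart g br = {x. \<forall>z\<in>center br. g x z = 0}"

definition jmap :: "('a::euclidean_space \<Rightarrow> 'a \<Rightarrow> real) \<Rightarrow> ('a \<Rightarrow> 'a \<Rightarrow> 'a) \<Rightarrow> 'a \<Rightarrow> 'a \<Rightarrow> 'a" where
  "jmap g br z x = (THE w. w \<in> vpart g br \<and> (\<forall>y\<in>vpart g br. g y w = g (br x y) z))"

definition pseudo_H_type :: "('a::euclidean_space \<Rightarrow> 'a \<Rightarrow> real) \<Rightarrow> ('a \<Rightarrow> 'a \<Rightarrow> 'a) \<Rightarrow> bool" where
  "pseudo_H_type g br \<longleftrightarrow>
     (\<forall>z\<in>center br. \<forall>x\<in>vpart g br. jmap g br z (jmap g br z x) = - (g z z) *\<^sub>R x)"

text \<open>Levi-Civita connection on left-invariant vector fields (Koszul formula):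
  2 g (nabla X Y) W = g [X,Y] W - g [Y,W] X + g [W,X] Y.\<close>
definition nabla :: "('a::euclidean_space \<Rightarrow> 'a \<Rightarrow> real) \<Rightarrow> ('a \<Rightarrow> 'a \<Rightarrow> 'a) \<Rightarrow> 'a \<Rightarrow> 'a \<Rightarrow> 'a" where
  "nabla g br X Y = (THE u. \<forall>W. 2 * g u W = g (br X Y) W - g (br Y W) X + g (br W X) Y)"

definition curv :: "('a::euclidean_space \<Rightarrow> 'a \<Rightarrow> real) \<Rightarrow> ('a \<Rightarrow> 'a \<Rightarrow> 'a) \<Rightarrow> 'a \<Rightarrow> 'a \<Rightarrow> 'a \<Rightarrow> 'a" where
  "curv g br X Y W = nabla g br X (nabla g br Y W) - nabla g br Y (nabla g br X W)
      - nabla g br (br X Y) W"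

definition sec_curv :: "('a::euclidean_space \<Rightarrow> 'a \<Rightarrow> real) \<Rightarrow> ('a \<Rightarrow> 'a \<Rightarrow> 'a) \<Rightarrow> 'a \<Rightarrow> 'a \<Rightarrow> real" where
  "sec_curv g br X Y = g (curv g br X Y Y) X / (g X X * g Y Y - (g X Y)\<^sup>2)"

text \<open>The plane spanned by X and Y is nondegenerate (Gram determinant nonzero; this also
forces X, Y to be linearly independent).\<close>
definition nondeg_plane :: "('a::euclidean_space \<Rightarrow> 'a \<Rightarrow> real) \<Rightarrow> 'a \<Rightarrow> 'a \<Rightarrow> bool" where
  "nondeg_plane g X Y \<longleftrightarrow> g X X * g Y Y - (g X Y)\<^sup>2 \<noteq> 0"

end

theory Submission
  imports Defs
begin


locale nil2 =
  fixes br :: "'a::euclidean_space \<Rightarrow> 'a \<Rightarrow> 'a" and g :: "'a \<Rightarrow> 'a \<Rightarrow> real"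
  assumes LA: "lie_algebra br" and N2: "two_step_nilpotent br"
    and PM: "pseudo_metric g" and ND: "nondeg_on g (center br)"
begin

abbreviation "C \<equiv> center br"
abbreviation "V \<equiv> vpart g br"

lemma gb: "bilinear g" using PM by (simp add: pseudo_metric_def)
lemma gsym: "g x y = g y x" using PM by (simp add: pseudo_metric_def)
lemma gnd: "(\<And>y. g x y = 0) \<Longrightarrow> x = 0" using PM by (simp add: pseudo_metric_def)
lemma bb: "bilinear br" using LA by (simp add: lie_algebra_def)
lemma bas: "br x y = - br y x" using LA unfolding lie_algebra_def by blast
lemma br_self: "br x x = 0"
proof -
  have h: "br x x + br x x = 0" using bas[of x x] by (metis add.right_inverse)
  have "2 *\<^sub>R br x x = 0" using h by (simp add: scaleR_2)
  then show ?thesis by simp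
qed
lemma br_center: "br x y \<in> C" using N2 by (simp add: two_step_nilpotent_def center_def)
lemma center_br2: "c \<in> C \<Longrightarrow> br y c = 0"
  using bas[of y c] by (simp add: center_def)
lemma g_VC: "x \<in> V \<Longrightarrow> c \<in> C \<Longrightarrow> g x c = 0" by (simp add: vpart_def)
lemma g_CV: "x \<in> V \<Longrightarrow> c \<in> C \<Longrightarrow> g c x = 0" using g_VC gsym by metis
lemma g_brV: "x \<in> V \<Longrightarrow> g (br a b) x = 0" using g_CV br_center by blast
lemma g_Vbr: "x \<in> V \<Longrightarrow> g x (br a b) = 0" using g_VC br_center by blast

lemmas gl = bilinear_ladd[OF gb] bilinear_radd[OF gb] bilinear_lmul[OF gb] bilinear_rmul[OF gb]
  bilinear_lsub[OF gb] bilinear_rsub[OF gb] bilinear_lneg[OF gb] bilinear_rneg[OF gb]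
  bilinear_lzero[OF gb] bilinear_rzero[OF gb]
lemmas bl = bilinear_ladd[OF bb] bilinear_radd[OF bb] bilinear_lmul[OF bb] bilinear_rmul[OF bb]
  bilinear_lsub[OF bb] bilinear_rsub[OF bb] bilinear_lneg[OF bb] bilinear_rneg[OF bb]
  bilinear_lzero[OF bb] bilinear_rzero[OF bb]

lemma subC: "subspace C"
  unfolding subspace_def center_def by (auto simp: bl)
lemma subV: "subspace V"
  unfolding subspace_def vpart_def by (auto simp: gl)

definition r :: "'a \<Rightarrow> 'a" where "r u = (\<Sum>b\<in>Basis. g u b *\<^sub>R b)"

lemma lin_repr: "linear f \<Longrightarrow> (\<Sum>b\<in>Basis. f b *\<^sub>R b) \<bullet> W = f W"
proof -
  assume lf: "linear f"
  have "f W = f (\<Sum>b\<in>Basis. (W \<bullet> b) *\<^sub>R b)" by (simp add: euclidean_representation)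
  also have "\<dots> = (\<Sum>b\<in>Basis. (W \<bullet> b) * f b)"
    by (simp add: linear_sum[OF lf] linear_scale[OF lf])
  also have "\<dots> = (\<Sum>b\<in>Basis. f b * (b \<bullet> W))"
    by (intro sum.cong refl) (simp add: inner_commute mult.commute)
  finally show ?thesis by (simp add: inner_sum_left)
qed

lemma r_inner: "r u \<bullet> W = g u W"
  unfolding r_def by (rule lin_repr) (use gb in \<open>simp add: bilinear_def\<close>)

lemma r_lin: "linear r"
  by (rule linearI) (simp_all add: r_def gl scaleR_add_left sum.distrib scaleR_sum_right)

lemma r_inj: "inj r"
proof (rule injI)
  fix x y assume "r x = r y"
  then have "g (x - y) W = 0" for W using r_inner[of x W] r_inner[of y W] by (simp add: gl)
  then show "x = y" using gnd[of "x - y"] by simp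
qed

lemma r_surj: "surj r"
  by (rule linear_injective_imp_surjective[OF r_lin r_inj]) simp

lemma riesz: "linear f \<Longrightarrow> \<exists>u. \<forall>W. g u W = f W"
proof -
  assume lf: "linear f"
  obtain u where "r u = (\<Sum>b\<in>Basis. f b *\<^sub>R b)" using r_surj by (metis surjD)
  then show ?thesis using r_inner lin_repr[OF lf] by metis
qed

lemma VC0: "V \<inter> C = {0}"
proof -
  have "x = 0" if "x \<in> V" "x \<in> C" for x
    using ND that unfolding nondeg_on_def vpart_def by blast
  moreover have "0 \<in> V" "0 \<in> C" using subV subC subspace_0 by auto
  ultimately show ?thesis by blast
qed

lemma decomp_full: "{x + y |x y. x \<in> V \<and> y \<in> C} = UNIV"
proof -
  let ?O = "{y \<in> UNIV. \<forall>x \<in> C. orthogonal x y}"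
  have d1: "dim ?O + dim C = dim (UNIV::'a set)"
    by (rule dim_subspace_orthogonal_to_vectors[OF subC subspace_UNIV subset_UNIV])
  have img: "r ` V = ?O"
  proof
    show "r ` V \<subseteq> ?O"
    proof
      fix y assume "y \<in> r ` V"
      then obtain x where x: "x \<in> V" "y = r x" by blast
      have "orthogonal z y" if "z \<in> C" for z
      proof -
        have "z \<bullet> y = r x \<bullet> z" using x(2) inner_commute by metis
        also have "\<dots> = g x z" by (rule r_inner)
        also have "\<dots> = 0" using x(1) that by (rule g_VC)
        finally show ?thesis unfolding orthogonal_def .
      qed
      then show "y \<in> ?O" by blast
    qed
    show "?O \<subseteq> r ` V"
    proof
      fix y assume y: "y \<in> ?O"
      obtain x where x: "y = r x" using r_surj by (metis surjD)
      have "g x z = 0" if "z \<in> C" for z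
      proof -
        have "g x z = r x \<bullet> z" by (rule r_inner[symmetric])
        also have "\<dots> = z \<bullet> y" using x inner_commute by metis
        also have "\<dots> = 0" using y that unfolding orthogonal_def by blast
        finally show ?thesis .
      qed
      then have "x \<in> V" unfolding vpart_def by blast
      then show "y \<in> r ` V" using x by blast
    qed
  qed
  have "dim (r ` V) = dim V"
    by (rule dim_image_eq[OF r_lin]) (use r_inj in \<open>auto simp: inj_on_def inj_def\<close>)
  then have d2: "dim V + dim C = dim (UNIV::'a set)" using d1 img by simp
  have sS: "subspace {x + y |x y. x \<in> V \<and> y \<in> C}"
    by (rule subspace_sums[OF subV subC])
  have i0: "dim (V \<inter> C) = 0" using VC0 by simp
  have "dim {x + y |x y. x \<in> V \<and> y \<in> C} = DIM('a)"
    using dim_sums_Int[OF subV subC] i0 d2 by simp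
  then have e1: "span {x + y |x y. x \<in> V \<and> y \<in> C} = UNIV"
    by (rule dim_eq_full[THEN iffD1])
  have e2: "span {x + y |x y. x \<in> V \<and> y \<in> C} = {x + y |x y. x \<in> V \<and> y \<in> C}"
    by (rule span_eq_iff[THEN iffD2, OF sS])
  show ?thesis using e2[symmetric] e1 by (rule trans)
qed

lemma ndV: "d \<in> V \<Longrightarrow> (\<And>y. y \<in> V \<Longrightarrow> g y d = 0) \<Longrightarrow> d = 0"
proof -
  assume d: "d \<in> V" and h: "\<And>y. y \<in> V \<Longrightarrow> g y d = 0"
  have "g W d = 0" for W
  proof -
    obtain y c where "y \<in> V" "c \<in> C" "W = y + c" using decomp_full by blast
    then show ?thesis using h g_CV[OF d] by (simp add: gl)
  qed
  then show "d = 0" using gnd gsym by metis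
qed

end


lemma quad0:
  fixes a b c t1 :: real
  assumes h: "\<And>t. t \<noteq> 0 \<Longrightarrow> t \<noteq> t1 \<Longrightarrow> a + b*t + c*t^2 = 0"
  shows "a = 0"
proof -
  define M where "M = \<bar>t1\<bar> + 1"
  have M: "M > 0" "M > t1" unfolding M_def by auto
  have e1: "a + b*M + c*M^2 = 0" using h M by force
  have e2: "a + b*(M+1) + c*(M+1)^2 = 0" using h M by force
  have e3: "a + b*(M+2) + c*(M+2)^2 = 0" using h M by force
  have i1: "(a + b*(M+1) + c*(M+1)^2) - (a + b*M + c*M^2) = b + c*(2*M+1)"
    by (simp add: power2_eq_square algebra_simps)
  have i2: "(a + b*(M+2) + c*(M+2)^2) - (a + b*(M+1) + c*(M+1)^2) = b + c*(2*M+3)"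
    by (simp add: power2_eq_square algebra_simps)
  have d1: "b + c*(2*M+1) = 0" using i1 e1 e2 by simp
  have d2: "b + c*(2*M+3) = 0" using i2 e2 e3 by simp
  have "c = 0" using d1 d2 by (simp add: algebra_simps)
  then have "b = 0" using d1 by simp
  then show "a = 0" using e1 \<open>c = 0\<close> by simp
qed

context nil2 begin

abbreviation J where "J z x \<equiv> jmap g br z x"

lemma jex: "\<exists>u. \<forall>W. g u W = g (br x W) z"
proof (rule riesz)
  show "linear (\<lambda>W. g (br x W) z)"
    by (rule linearI) (simp_all add: bl gl)
qed

lemma jchar: "J z x \<in> V \<and> (\<forall>W. g (J z x) W = g (br x W) z)"
proof -
  obtain u where u: "\<forall>W. g u W = g (br x W) z" using jex by blast
  have uV: "u \<in> V" unfolding vpart_def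
  proof
    show "\<forall>c\<in>C. g u c = 0"
      using u center_br2 by (simp add: gl)
  qed
  have P: "u \<in> V \<and> (\<forall>y\<in>V. g y u = g (br x y) z)" using uV u gsym by metis
  have "J z x = u" unfolding jmap_def
  proof (rule the_equality)
    show "u \<in> V \<and> (\<forall>y\<in>V. g y u = g (br x y) z)" by (rule P)
    fix w assume w: "w \<in> V \<and> (\<forall>y\<in>V. g y w = g (br x y) z)"
    have "w - u \<in> V" using w uV subV subspace_diff by blast
    moreover have "g y (w - u) = 0" if "y \<in> V" for y using w P that by (simp add: gl)
    ultimately have "w - u = 0" by (rule ndV)
    then show "w = u" by simp
  qed
  then show ?thesis using uV u by simp
qed

lemma jV: "J z x \<in> V" using jchar by blast
lemma jg: "g (J z x) W = g (br x W) z" using jchar by blast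

lemma jeq: "(\<And>W. g v W = g (br x W) z) \<Longrightarrow> J z x = v"
proof -
  assume h: "\<And>W. g v W = g (br x W) z"
  have "g (J z x - v) W = 0" for W using h jg by (simp add: gl)
  then show ?thesis using gnd by force
qed

lemma jlin_x: "J z (x + t *\<^sub>R y) = J z x + t *\<^sub>R J z y"
  by (rule jeq) (simp add: gl bl jg)
lemma jlin_z: "J (z + s *\<^sub>R w) x = J z x + s *\<^sub>R J w x"
  by (rule jeq) (simp add: gl bl jg)
lemma j0x: "J z 0 = 0"
  by (rule jeq) (simp add: gl bl)
lemma j0z: "J 0 x = 0"
  by (rule jeq) (simp add: gl bl)

lemma jskew: "g (J z x) (J z y) = - g (J z (J z x)) y"
proof -
  have "g (J z x) (J z y) = g (J z y) (J z x)" by (rule gsym)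
  also have "\<dots> = g (br y (J z x)) z" by (rule jg)
  also have "\<dots> = - g (br (J z x) y) z" using bas[of y "J z x"] by (simp add: gl)
  also have "\<dots> = - g (J z (J z x)) y" using jg by simp
  finally show ?thesis .
qed

lemma gexp: "g (a + t *\<^sub>R b) (a + t *\<^sub>R b) = g a a + t * (2 * g a b) + t^2 * g b b"
  using gsym[of b a] by (simp add: gl power2_eq_square algebra_simps)

lemma nabla_eq: "(\<And>W. 2 * g u W = g (br X Y) W - g (br Y W) X + g (br W X) Y) \<Longrightarrow> nabla g br X Y = u"
proof -
  assume h: "\<And>W. 2 * g u W = g (br X Y) W - g (br Y W) X + g (br W X) Y"
  show ?thesis unfolding nabla_def
  proof (rule the_equality)
    show "\<forall>W. 2 * g u W = g (br X Y) W - g (br Y W) X + g (br W X) Y" using h by blast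
    fix u' assume h': "\<forall>W. 2 * g u' W = g (br X Y) W - g (br Y W) X + g (br W X) Y"
    have "g (u' - u) W = 0" for W using h[of W] h'[rule_format, of W] by (simp add: gl)
    then show "u' = u" using gnd by force
  qed
qed

lemma curv_formula:
  assumes z: "z \<in> C" and x: "x \<in> V"
  shows "g (curv g br z x x) z = 1/4 * g (J z x) (J z x)"
proof -
  let ?K = "(-1/2) *\<^sub>R J z x"
  have KV: "?K \<in> V" using jV subV subspace_mul by blast
  have bzx: "br z x = 0" using z by (simp add: center_def)
  have n1: "nabla g br x x = 0"
    by (rule nabla_eq) (simp add: gl br_self g_brV[OF x])
  have n2: "nabla g br z 0 = 0"
    by (rule nabla_eq) (simp add: gl bl)
  have n3: "nabla g br z x = ?K"
  proof (rule nabla_eq)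
    fix W
    show "2 * g ?K W = g (br z x) W - g (br x W) z + g (br W z) x"
      using bzx center_br2[OF z, of W] jg[of z x W] by (simp add: gl)
  qed
  have n4: "nabla g br x ?K = (1/2) *\<^sub>R br x ?K"
  proof (rule nabla_eq)
    fix W
    show "2 * g ((1/2) *\<^sub>R br x ?K) W = g (br x ?K) W - g (br ?K W) x + g (br W x) ?K"
      using g_brV[OF x, of ?K W] g_brV[OF KV, of W x] by (simp add: gl)
  qed
  have n5: "nabla g br 0 x = 0"
    by (rule nabla_eq) (simp add: gl bl)
  have cv: "curv g br z x x = (1/4) *\<^sub>R br x (J z x)"
    unfolding curv_def n1 n2 n3 n4 bzx n5 by (simp add: bl)
  have "g (curv g br z x x) z = 1/4 * g (br x (J z x)) z" unfolding cv by (simp add: gl)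
  also have "\<dots> = 1/4 * g (J z x) (J z x)" using jg[of z x "J z x"] by simp
  finally show ?thesis .
qed

lemma sec_formula:
  assumes z: "z \<in> C" and x: "x \<in> V"
  shows "sec_curv g br z x = (1/4 * g (J z x) (J z x)) / (g z z * g x x)"
    and "nondeg_plane g z x \<longleftrightarrow> g z z * g x x \<noteq> 0"
  unfolding sec_curv_def nondeg_plane_def curv_formula[OF z x] g_CV[OF x z] by simp_all

end


context nil2 begin

definition Q where "Q z x = g (J z x) (J z x) - g z z * g x x"

lemma forward:
  assumes H: "pseudo_H_type g br" and z: "z \<in> C" and x: "x \<in> V" and nd: "nondeg_plane g z x"
  shows "sec_curv g br z x = 1/4"
proof -
  have jj: "J z (J z x) = - (g z z) *\<^sub>R x" using H z x by (simp add: pseudo_H_type_def)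
  have "g (J z x) (J z x) = - g (J z (J z x)) x" by (rule jskew)
  also have "\<dots> = g z z * g x x" unfolding jj by (simp add: gl)
  finally have e: "g (J z x) (J z x) = g z z * g x x" .
  have "g z z * g x x \<noteq> 0" using sec_formula(2)[OF z x] nd by blast
  then show ?thesis unfolding sec_formula(1)[OF z x] e by simp
qed

lemma Qexp_x: "Q z (x + t *\<^sub>R y) = Q z x + t * (2 * g (J z x) (J z y) - 2 * g z z * g x y)
    + t^2 * Q z y"
  unfolding Q_def jlin_x gexp by (simp add: algebra_simps)

lemma Qexp_z: "Q (z + s *\<^sub>R w) x = Q z x + s * (2 * g (J z x) (J w x) - 2 * g z w * g x x)
    + s^2 * Q w x"
  unfolding Q_def jlin_z gexp by (simp add: algebra_simps)

lemma line_nonnull: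
  assumes "g a b \<noteq> 0" "g a a = 0" "t \<noteq> 0" "t \<noteq> - 2 * g a b / g b b"
  shows "g (a + t *\<^sub>R b) (a + t *\<^sub>R b) \<noteq> 0"
proof
  assume "g (a + t *\<^sub>R b) (a + t *\<^sub>R b) = 0"
  then have "t * (2 * g a b + t * g b b) = 0" using assms(2) unfolding gexp
    by (simp add: algebra_simps power2_eq_square)
  then have h: "2 * g a b + t * g b b = 0" using assms(3) by simp
  show False
  proof (cases "g b b = 0")
    case True then show False using h assms(1) by simp
  next
    case False
    then have "t = - 2 * g a b / g b b" using h by (simp add: field_simps)
    then show False using assms(4) by simp
  qed
qed

lemma stepA:
  assumes H: "\<And>z x. z \<in> C \<Longrightarrow> x \<in> V \<Longrightarrow> g z z * g x x \<noteq> 0 \<Longrightarrow> Q z x = 0"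
    and z: "z \<in> C" and zz: "g z z \<noteq> 0" and x: "x \<in> V"
  shows "Q z x = 0"
proof (cases "g x x = 0")
  case False then show ?thesis using H z x zz by simp
next
  case xx: True
  show ?thesis
  proof (cases "x = 0")
    case True then show ?thesis by (simp add: Q_def j0x gl)
  next
    case False
    obtain y where y: "y \<in> V" "g y x \<noteq> 0" using ndV[OF x] False by blast
    have gxy: "g x y \<noteq> 0" using y gsym by metis
    show ?thesis
    proof (rule quad0)
      fix t assume t: "t \<noteq> 0" "t \<noteq> - 2 * g x y / g y y"
      have xyV: "x + t *\<^sub>R y \<in> V" using x y subV
        by (simp add: subspace_add subspace_mul)
      have "g (x + t *\<^sub>R y) (x + t *\<^sub>R y) \<noteq> 0" by (rule line_nonnull[OF gxy xx t])
      then have "Q z (x + t *\<^sub>R y) = 0" using H[OF z xyV] zz by simp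
      then show "Q z x + (2 * g (J z x) (J z y) - 2 * g z z * g x y) * t + Q z y * t^2 = 0"
        unfolding Qexp_x by (simp add: algebra_simps)
    qed
  qed
qed

lemma stepB:
  assumes H: "\<And>z x. z \<in> C \<Longrightarrow> x \<in> V \<Longrightarrow> g z z * g x x \<noteq> 0 \<Longrightarrow> Q z x = 0"
    and z: "z \<in> C" and x: "x \<in> V"
  shows "Q z x = 0"
proof (cases "g z z = 0")
  case False then show ?thesis using stepA[OF H z False x] by simp
next
  case zz: True
  show ?thesis
  proof (cases "z = 0")
    case True then show ?thesis by (simp add: Q_def j0z gl)
  next
    case False
    obtain w where w: "w \<in> C" "g z w \<noteq> 0" using ND z False unfolding nondeg_on_def by blast
    show ?thesis
    proof (rule quad0)
      fix s assume s: "s \<noteq> 0" "s \<noteq> - 2 * g z w / g w w"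
      have zwC: "z + s *\<^sub>R w \<in> C" using z w subC
        by (simp add: subspace_add subspace_mul)
      have "g (z + s *\<^sub>R w) (z + s *\<^sub>R w) \<noteq> 0" by (rule line_nonnull[OF w(2) zz s])
      then have "Q (z + s *\<^sub>R w) x = 0" using stepA[OF H zwC _ x] by simp
      then show "Q z x + (2 * g (J z x) (J w x) - 2 * g z w * g x x) * s + Q w x * s^2 = 0"
        unfolding Qexp_z by (simp add: algebra_simps)
    qed
  qed
qed

lemma backward:
  assumes K: "\<forall>z\<in>C. \<forall>x\<in>V. nondeg_plane g z x \<longrightarrow> sec_curv g br z x = 1/4"
  shows "pseudo_H_type g br"
  unfolding pseudo_H_type_def
proof (intro ballI)
  fix z x assume z: "z \<in> C" and x: "x \<in> V"
  have H: "Q z x = 0" if "z \<in> C" "x \<in> V" "g z z * g x x \<noteq> 0" for z x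
  proof -
    have "(1/4 * g (J z x) (J z x)) / (g z z * g x x) = sec_curv g br z x"
      by (rule sec_formula(1)[OF that(1,2), symmetric])
    also have "\<dots> = 1/4" using K that sec_formula(2) by blast
    finally have "(1/4 * g (J z x) (J z x)) / (g z z * g x x) = 1/4" .
    then have "g (J z x) (J z x) = g z z * g x x" using that(3) by (simp add: field_simps)
    then show ?thesis by (simp add: Q_def)
  qed
  have QQ: "\<And>z x. z \<in> C \<Longrightarrow> x \<in> V \<Longrightarrow> Q z x = 0" using stepB[OF H] by blast
  have pol: "g (J z x) (J z y) = g z z * g x y" if y: "y \<in> V" for y
  proof -
    have "x + 1 *\<^sub>R y \<in> V" using x y subV by (simp add: subspace_add)
    then have "Q z (x + 1 *\<^sub>R y) = 0" using QQ z by blast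
    then show ?thesis unfolding Qexp_x using QQ[OF z x] QQ[OF z y] by simp
  qed
  let ?d = "J z (J z x) + g z z *\<^sub>R x"
  have dV: "?d \<in> V" using jV x subV by (simp add: subspace_add subspace_mul)
  have "g y ?d = 0" if y: "y \<in> V" for y
  proof -
    have "g y ?d = g (J z (J z x)) y + g z z * g x y" using gsym[of y] by (simp add: gl)
    also have "\<dots> = - g (J z x) (J z y) + g z z * g x y" using jskew[of z x y] by simp
    also have "\<dots> = 0" using pol[OF y] by simp
    finally show ?thesis .
  qed
  then have "?d = 0" using ndV[OF dV] by blast
  then show "J z (J z x) = - g z z *\<^sub>R x" by (simp add: eq_neg_iff_add_eq_0)
qed

end

theorem corollary4p9:
  fixes br :: "'a::euclidean_space \<Rightarrow> 'a \<Rightarrow> 'a" and g :: "'a \<Rightarrow> 'a \<Rightarrow> real"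
  assumes "lie_algebra br" and "two_step_nilpotent br"
    and "pseudo_metric g"
    and "nondeg_on g (center br)"
  shows "pseudo_H_type g br \<longleftrightarrow>
    (\<forall>z\<in>center br. \<forall>x\<in>vpart g br. nondeg_plane g z x \<longrightarrow> sec_curv g br z x = 1/4)"
proof -
  interpret nil2 br g using assms by (unfold_locales)
  show ?thesis using forward backward by blast
qed

end
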